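(* Let $H\in\mathfrak a$. For $\varepsilon\in\mathrm U(1)$ put $\Sigma_{\varepsilon,H}=\{\alpha\in\Sigma_\varepsilon:\langle\alpha,H\rangle+\varphi_\varepsilon\in\pi\mathbb Z\}$ and $\tilde\Sigma_H=\bigcup_{\varepsilon\in\mathrm U(1)}\Sigma_{\varepsilon,H}$. If $\tilde\Sigma_H\ne\emptyset$, then $\tilde\Sigma_H$ is a root system of $\mathrm{Span}(\tilde\Sigma_H)\subset\mathfrak a$.
   Context: Let $G$ be a compact connected semisimple Lie group with Lie algebra $\mathfrak g$, and let $\theta_1,\theta_2$ be involutive automorphisms of $G$ with $(\theta_1\theta_2)^l=\mathrm{id}_G$ for some positive integer $l$; induced involutions on $\mathfrak g,\mathfrak g^{\mathbb C}$ are also denoted $\theta_i$. $\mathfrak m_i=\{X\in\mathfrak g:\theta_iX=-X\}$. Fix an $\mathrm{Ad}(G)$-invariant inner product $\langle\cdot,\cdot\rangle$ on $\mathfrak g$. Let $\mathfrak a$ be a maximal abelian subspace of $\mathfrak m_1\cap\mathfrak m_2$, vectors identified with linear forms via $\langle\cdot,\cdot\rangle$. For $\alpha\in\mathfrak a$, $\varepsilon\in\mathrm U(1)$: $\mathfrak g(\alpha)=\{X\in\mathfrak g^{\mathbb C}:[H,X]=\sqrt{-1}\langle\alpha,H\rangle X\ \forall H\in\mathfrak a\}$, $\mathfrak g(\alpha,\varepsilon)=\{X\in\mathfrak g(\alpha):\theta_1\theta_2X=\varepsilon X\}$, $\Sigma_\varepsilon=\{\alpha\in\mathfrak a\setminus\{0\}:\mathfrak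 g(\alpha,\varepsilon)\ne0\}$, and $\varphi_\varepsilon\in(-\pi/2,\pi/2]$ with $\varepsilon=e^{2\sqrt{-1}\varphi_\varepsilon}$. *)

theory Defs
  imports "HOL-Analysis.Analysis"
begin

definition lie_algebra :: "('g::euclidean_space \<Rightarrow> 'g \<Rightarrow> 'g) \<Rightarrow> bool" where
  "lie_algebra br \<longleftrightarrow> bilinear br \<and> (\<forall>X. br X X = 0) \<and>
     (\<forall>X Y Z. br X (br Y Z) + br Y (br Z X) + br Z (br X Y) = 0)"

text \<open>Killing form B(X,Y) = tr(ad X ad Y), trace computed in an orthonormal basis.\<close>
definition killing_form :: "('g::euclidean_space \<Rightarrow> 'g \<Rightarrow> 'g) \<Rightarrow> 'g \<Rightarrow> 'g \<Rightarrow> real" where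
  "killing_form br X Y = (\<Sum>b\<in>Basis. inner (br X (br Y b)) b)"

text \<open>Semisimple: nondegenerate Killing form (Cartan's criterion).\<close>
definition semisimple_lie_algebra :: "('g::euclidean_space \<Rightarrow> 'g \<Rightarrow> 'g) \<Rightarrow> bool" where
  "semisimple_lie_algebra br \<longleftrightarrow> lie_algebra br \<and>
     (\<forall>X. (\<forall>Y. killing_form br X Y = 0) \<longrightarrow> X = 0)"

text \<open>The inner product of 'g is ad-invariant (infinitesimal Ad(G)-invariance).\<close>
definition ad_invariant_inner :: "('g::euclidean_space \<Rightarrow> 'g \<Rightarrow> 'g) \<Rightarrow> bool" where
  "ad_invariant_inner br \<longleftrightarrow> (\<forall>X Y Z. inner (br X Y) Z + inner Y (br X Z) = 0)"

definition lie_automorphism :: "('g::euclidean_space \<Rightarrow> 'g \<Rightarrow> 'g) \<Rightarrow> ('g \<Rightarrow> 'g) \<Rightarrow> bool" where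
  "lie_automorphism br \<theta> \<longleftrightarrow> linear \<theta> \<and> bij \<theta> \<and> (\<forall>X Y. \<theta> (br X Y) = br (\<theta> X) (\<theta> Y))"

definition involutive_automorphism :: "('g::euclidean_space \<Rightarrow> 'g \<Rightarrow> 'g) \<Rightarrow> ('g \<Rightarrow> 'g) \<Rightarrow> bool" where
  "involutive_automorphism br \<theta> \<longleftrightarrow> lie_automorphism br \<theta> \<and> (\<forall>X. \<theta> (\<theta> X) = X)"

definition minus_space :: "('g::real_vector \<Rightarrow> 'g) \<Rightarrow> 'g set" where
  "minus_space \<theta> = {X. \<theta> X = - X}"

definition abelian_subspace :: "('g::euclidean_space \<Rightarrow> 'g \<Rightarrow> 'g) \<Rightarrow> 'g set \<Rightarrow> bool" where
  "abelian_subspace br a \<longleftrightarrow> subspace a \<and> (\<forall>X\<in>a. \<forall>Y\<in>a. br X Y = 0)"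

definition maximal_abelian_subspace_in ::
  "('g::euclidean_space \<Rightarrow> 'g \<Rightarrow> 'g) \<Rightarrow> 'g set \<Rightarrow> 'g set \<Rightarrow> bool" where
  "maximal_abelian_subspace_in br m a \<longleftrightarrow> abelian_subspace br a \<and> a \<subseteq> m \<and>
     (\<forall>b. abelian_subspace br b \<and> a \<subseteq> b \<and> b \<subseteq> m \<longrightarrow> b = a)"

text \<open>Complexification g^C modelled as pairs (X,Y) standing for X + sqrt(-1) Y.
  Root space g(alpha) relative to a:
  [H,Z] = sqrt(-1) <alpha,H> Z for all H in a, with [H, X + iY] = [H,X] + i[H,Y]
  and  i c (X + iY) = -cY + i cX.\<close>
definition root_space ::
  "('g::euclidean_space \<Rightarrow> 'g \<Rightarrow> 'g) \<Rightarrow> 'g set \<Rightarrow> 'g \<Rightarrow> ('g \<times> 'g) set" where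
  "root_space br a \<alpha> = {(X, Y). \<forall>H\<in>a.
      br H X = - (inner \<alpha> H) *\<^sub>R Y \<and> br H Y = (inner \<alpha> H) *\<^sub>R X}"

definition cscale :: "complex \<Rightarrow> ('g::real_vector \<times> 'g) \<Rightarrow> 'g \<times> 'g" where
  "cscale c Z = (Re c *\<^sub>R fst Z - Im c *\<^sub>R snd Z, Im c *\<^sub>R fst Z + Re c *\<^sub>R snd Z)"

text \<open>g(alpha, eps): elements of g(alpha) on which the complex-linear extension
  of theta1 theta2 acts by eps.\<close>
definition root_space_eps ::
  "('g::euclidean_space \<Rightarrow> 'g \<Rightarrow> 'g) \<Rightarrow> ('g \<Rightarrow> 'g) \<Rightarrow> ('g \<Rightarrow> 'g) \<Rightarrow> 'g set \<Rightarrow> 'g \<Rightarrow> complex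
     \<Rightarrow> ('g \<times> 'g) set" where
  "root_space_eps br \<theta>1 \<theta>2 a \<alpha> \<epsilon> =
     {Z \<in> root_space br a \<alpha>. (\<theta>1 (\<theta>2 (fst Z)), \<theta>1 (\<theta>2 (snd Z))) = cscale \<epsilon> Z}"

definition Sigma_eps ::
  "('g::euclidean_space \<Rightarrow> 'g \<Rightarrow> 'g) \<Rightarrow> ('g \<Rightarrow> 'g) \<Rightarrow> ('g \<Rightarrow> 'g) \<Rightarrow> 'g set \<Rightarrow> complex \<Rightarrow> 'g set" where
  "Sigma_eps br \<theta>1 \<theta>2 a \<epsilon> =
     {\<alpha> \<in> a - {0}. root_space_eps br \<theta>1 \<theta>2 a \<alpha> \<epsilon> \<noteq> {(0, 0)}}"

definition phi_eps :: "complex \<Rightarrow> real" where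
  "phi_eps \<epsilon> = (THE \<phi>. - (pi / 2) < \<phi> \<and> \<phi> \<le> pi / 2 \<and> \<epsilon> = exp (2 * \<i> * complex_of_real \<phi>))"

definition Sigma_eps_H ::
  "('g::euclidean_space \<Rightarrow> 'g \<Rightarrow> 'g) \<Rightarrow> ('g \<Rightarrow> 'g) \<Rightarrow> ('g \<Rightarrow> 'g) \<Rightarrow> 'g set \<Rightarrow> complex \<Rightarrow> 'g \<Rightarrow> 'g set" where
  "Sigma_eps_H br \<theta>1 \<theta>2 a \<epsilon> H =
     {\<alpha> \<in> Sigma_eps br \<theta>1 \<theta>2 a \<epsilon>. \<exists>k::int. inner \<alpha> H + phi_eps \<epsilon> = pi * of_int k}"

definition Sigma_tilde_H ::
  "('g::euclidean_space \<Rightarrow> 'g \<Rightarrow> 'g) \<Rightarrow> ('g \<Rightarrow> 'g) \<Rightarrow> ('g \<Rightarrow> 'g) \<Rightarrow> 'g set \<Rightarrow> 'g \<Rightarrow> 'g set" where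
  "Sigma_tilde_H br \<theta>1 \<theta>2 a H = (\<Union>\<epsilon>\<in>{\<epsilon>. cmod \<epsilon> = 1}. Sigma_eps_H br \<theta>1 \<theta>2 a \<epsilon> H)"

text \<open>(Possibly non-reduced) root system R of the subspace V (Bourbaki), with the
  inner product inherited from 'g.\<close>
definition root_system_of :: "'g::euclidean_space set \<Rightarrow> 'g set \<Rightarrow> bool" where
  "root_system_of V R \<longleftrightarrow> finite R \<and> R \<subseteq> V \<and> span R = V \<and> 0 \<notin> R \<and>
     (\<forall>\<alpha>\<in>R. \<forall>\<beta>\<in>R. \<beta> - (2 * inner \<beta> \<alpha> / inner \<alpha> \<alpha>) *\<^sub>R \<alpha> \<in> R) \<and>
     (\<forall>\<alpha>\<in>R. \<forall>\<beta>\<in>R. 2 * inner \<beta> \<alpha> / inner \<alpha> \<alpha> \<in> \<int>)"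

end

theory Submission
  imports Defs
begin



lemma exp_2i_eq1: "exp (2 * \<i> * complex_of_real x) = 1 \<longleftrightarrow> (\<exists>k::int. x = pi * of_int k)"
proof -
  have "exp (2 * \<i> * complex_of_real x) = 1 \<longleftrightarrow> (\<exists>n::int. 2 * x = of_int (2*n) * pi)"
    by (subst exp_eq_1) simp
  also have "\<dots> \<longleftrightarrow> (\<exists>k::int. x = pi * of_int k)"
    by (auto simp: algebra_simps)
  finally show ?thesis .
qed

lemma phi_eps_prop:
  assumes "cmod \<epsilon> = 1"
  shows "exp (2 * \<i> * complex_of_real (phi_eps \<epsilon>)) = \<epsilon>"
proof -
  have ne: "\<epsilon> \<noteq> 0" using assms by auto
  define p where "p = Arg \<epsilon> / 2"
  have P: "- (pi / 2) < p \<and> p \<le> pi / 2 \<and> \<epsilon> = exp (2 * \<i> * complex_of_real p)"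
  proof -
    have "sgn \<epsilon> = \<epsilon>" using assms by (simp add: sgn_div_norm)
    then have "\<epsilon> = cis (Arg \<epsilon>)" using cis_Arg[OF ne] by simp
    then have "\<epsilon> = exp (2 * \<i> * complex_of_real p)" by (simp add: cis_conv_exp p_def mult.commute)
    moreover have "- pi < Arg \<epsilon> \<and> Arg \<epsilon> \<le> pi" by (rule Arg_bounded)
    ultimately show ?thesis by (auto simp: p_def)
  qed
  have "phi_eps \<epsilon> = p"
    unfolding phi_eps_def
  proof (rule the_equality)
    show "- (pi / 2) < p \<and> p \<le> pi / 2 \<and> \<epsilon> = exp (2 * \<i> * complex_of_real p)" by (rule P)
  next
    fix q assume Q: "- (pi / 2) < q \<and> q \<le> pi / 2 \<and> \<epsilon> = exp (2 * \<i> * complex_of_real q)"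
    have "exp (2 * \<i> * complex_of_real (q - p)) = exp (2 * \<i> * complex_of_real q) / exp (2 * \<i> * complex_of_real p)"
      by (simp add: algebra_simps exp_diff[symmetric])
    also have "\<dots> = 1" using P Q ne by simp
    finally obtain k :: int where k: "q - p = pi * of_int k" using exp_2i_eq1 by blast
    have "\<bar>q - p\<bar> < pi" using P Q by auto
    then have "\<bar>of_int k\<bar> < (1::real)" using k pi_gt_zero
      by (simp add: abs_mult)
    then have "k = 0" by linarith
    then show "q = p" using k by simp
  qed
  then show ?thesis using P by simp
qed

lemma phi_cond_iff:
  assumes "cmod \<epsilon> = 1"
  shows "(\<exists>k::int. x + phi_eps \<epsilon> = pi * of_int k) \<longleftrightarrow> exp (2 * \<i> * complex_of_real x) * \<epsilon> = 1"
proof -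
  have "exp (2 * \<i> * complex_of_real x) * \<epsilon> = exp (2 * \<i> * complex_of_real (x + phi_eps \<epsilon>))"
    using phi_eps_prop[OF assms] by (simp add: algebra_simps exp_add)
  then show ?thesis using exp_2i_eq1[of "x + phi_eps \<epsilon>"] by simp
qed




lemma eig_indep:
  fixes S :: "'v::real_inner set" and T :: "'i \<Rightarrow> 'v \<Rightarrow> 'v"
  assumes "finite S" "0 \<notin> S" "\<forall>i. linear (T i)"
    "\<forall>v\<in>S. \<forall>i. \<exists>c. T i v = c *\<^sub>R v"
    "\<forall>v\<in>S. \<forall>w\<in>S. v \<noteq> w \<longrightarrow> (\<exists>i c d. T i v = c *\<^sub>R v \<and> T i w = d *\<^sub>R w \<and> c \<noteq> d)"
  shows "independent S"
  using assms
proof (induction S rule: finite_induct)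
  case empty
  then show ?case by (simp add: independent_empty)
next
  case (insert x F)
  define lam where "lam v i = inner (T i v) v / inner v v" for v i
  have lamE: "T i v = lam v i *\<^sub>R v" if vin: "v \<in> insert x F" for v i
  proof -
    obtain c where c: "T i v = c *\<^sub>R v" using bspec[OF insert.prems(3) vin] by blast
    have "v \<noteq> 0" using insert.prems(1) that by auto
    then have "inner v v \<noteq> 0" by simp
    then have "lam v i = c" by (simp add: lam_def c)
    then show ?thesis using c by simp
  qed
  have lamD: "\<exists>i. lam v i \<noteq> lam w i" if vw: "v \<in> insert x F" "w \<in> insert x F" "v \<noteq> w" for v w
  proof -
    obtain i c d where cd: "T i v = c *\<^sub>R v" "T i w = d *\<^sub>R w" "c \<noteq> d"
      using bspec[OF bspec[OF insert.prems(4) vw(1)] vw(2)] vw(3) by blast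
    have "v \<noteq> 0" "w \<noteq> 0" using insert.prems(1) that by auto
    have "lam v i *\<^sub>R v = c *\<^sub>R v" "lam w i *\<^sub>R w = d *\<^sub>R w"
      using lamE[OF vw(1), of i] lamE[OF vw(2), of i] cd by auto
    then have "lam v i = c" "lam w i = d" using \<open>v \<noteq> 0\<close> \<open>w \<noteq> 0\<close> by simp_all
    then show ?thesis using cd by metis
  qed
  have indF: "independent F"
  proof (rule insert.IH)
    show "0 \<notin> F" using insert.prems(1) by simp
    show "\<forall>i. linear (T i)" by (rule insert.prems(2))
    show "\<forall>v\<in>F. \<forall>i. \<exists>c. T i v = c *\<^sub>R v" using insert.prems(3) by simp
    show "\<forall>v\<in>F. \<forall>w\<in>F. v \<noteq> w \<longrightarrow> (\<exists>i c d. T i v = c *\<^sub>R v \<and> T i w = d *\<^sub>R w \<and> c \<noteq> d)"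
      using insert.prems(4) by simp
  qed
  have "x \<notin> span F"
  proof
    assume "x \<in> span F"
    then obtain u where u: "x = (\<Sum>v\<in>F. u v *\<^sub>R v)" using span_finite[OF insert.hyps(1)] by auto
    have uz: "u v = 0" if vF: "v \<in> F" for v
    proof -
      obtain i where i: "lam v i \<noteq> lam x i" using lamD[of v x] vF insert.hyps(2) by auto
      have lin: "linear (T i)" using insert.prems(2) by blast
      have A: "T i x = (\<Sum>w\<in>F. (u w * lam w i) *\<^sub>R w)"
      proof -
        have "T i x = (\<Sum>w\<in>F. T i (u w *\<^sub>R w))" unfolding u by (rule linear_sum[OF lin])
        also have "\<dots> = (\<Sum>w\<in>F. (u w * lam w i) *\<^sub>R w)"
        proof (rule sum.cong)
          fix w assume "w \<in> F"
          then have "T i w = lam w i *\<^sub>R w" using lamE by blast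
          then show "T i (u w *\<^sub>R w) = (u w * lam w i) *\<^sub>R w"
            using linear_scale[OF lin] by simp
        qed simp
        finally show ?thesis .
      qed
      have B: "T i x = (\<Sum>w\<in>F. (u w * lam x i) *\<^sub>R w)"
      proof -
        have "T i x = lam x i *\<^sub>R x" using lamE by blast
        also have "\<dots> = (\<Sum>w\<in>F. lam x i *\<^sub>R (u w *\<^sub>R w))" unfolding u by (rule scaleR_sum_right)
        also have "\<dots> = (\<Sum>w\<in>F. (u w * lam x i) *\<^sub>R w)" by (simp add: mult.commute)
        finally show ?thesis .
      qed
      have "(\<Sum>w\<in>F. (u w * (lam w i - lam x i)) *\<^sub>R w) = (\<Sum>w\<in>F. (u w * lam w i) *\<^sub>R w - (u w * lam x i) *\<^sub>R w)"
        by (rule sum.cong) (simp_all add: right_diff_distrib scaleR_diff_left)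
      also have "\<dots> = 0" using A B by (simp add: sum_subtractf)
      finally have eq0: "(\<Sum>w\<in>F. (u w * (lam w i - lam x i)) *\<^sub>R w) = 0" .
      have "u v * (lam v i - lam x i) = 0"
      proof (rule ccontr)
        assume nz: "u v * (lam v i - lam x i) \<noteq> 0"
        have "dependent F" unfolding dependent_finite[OF insert.hyps(1)]
          apply (rule exI[of _ "\<lambda>w. u w * (lam w i - lam x i)"])
          using eq0 vF nz by auto
        then show False using indF by simp
      qed
      then show ?thesis using i by simp
    qed
    then have "x = 0" using u by simp
    then show False using insert.prems(1) by simp
  qed
  then show ?case using indF independent_insertI by blast
qed

lemma linpow: fixes g :: "'a::real_vector \<Rightarrow> 'a" shows "linear g \<Longrightarrow> linear (g ^^ k)"
proof (induction k)
  case 0 show ?case by (simp add: linear_iff)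
next
  case (Suc k) then show ?case using linear_compose[of "g ^^ k" g] by (simp add: o_def)
qed

locale sl2 =
  fixes e f h :: "'v::euclidean_space \<Rightarrow> 'v"
  assumes lin_e: "linear e" and lin_f: "linear f" and lin_h: "linear h"
    and he: "\<And>x. h (e x) = e (h x) + 2 *\<^sub>R e x"
    and hf: "\<And>x. h (f x) = f (h x) - 2 *\<^sub>R f x"
    and ef: "\<And>x. e (f x) = f (e x) + h x"
begin

lemma pow0: fixes g :: "'v \<Rightarrow> 'v" assumes "linear g" shows "(g ^^ k) 0 = 0"
  using linear_0[OF linpow[OF assms]] .

lemma h_epow: "h v = m *\<^sub>R v \<Longrightarrow> h ((e ^^ k) v) = (m + 2 * real k) *\<^sub>R (e ^^ k) v"
proof (induction k)
  case 0 then show ?case by simp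
next
  case (Suc k)
  have "h ((e ^^ Suc k) v) = e (h ((e ^^ k) v)) + 2 *\<^sub>R e ((e ^^ k) v)" using he by simp
  also have "\<dots> = (m + 2 * real k) *\<^sub>R e ((e ^^ k) v) + 2 *\<^sub>R e ((e ^^ k) v)"
    using Suc linear_scale[OF lin_e] by simp
  also have "\<dots> = ((m + 2 * real k) + 2) *\<^sub>R e ((e ^^ k) v)"
    by (rule scaleR_add_left[symmetric])
  also have "(m + 2 * real k) + 2 = m + 2 * real (Suc k)" by simp
  finally show ?case by simp
qed

lemma h_fpow: "h v = m *\<^sub>R v \<Longrightarrow> h ((f ^^ k) v) = (m - 2 * real k) *\<^sub>R (f ^^ k) v"
proof (induction k)
  case 0 then show ?case by simp
next
  case (Suc k)
  have "h ((f ^^ Suc k) v) = f (h ((f ^^ k) v)) - 2 *\<^sub>R f ((f ^^ k) v)" using hf by simp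
  also have "\<dots> = (m - 2 * real k) *\<^sub>R f ((f ^^ k) v) - 2 *\<^sub>R f ((f ^^ k) v)"
    using Suc linear_scale[OF lin_f] by simp
  also have "\<dots> = ((m - 2 * real k) - 2) *\<^sub>R f ((f ^^ k) v)"
    by (rule scaleR_diff_left[symmetric])
  also have "(m - 2 * real k) - 2 = m - 2 * real (Suc k)" by simp
  finally show ?case by simp
qed

lemma fin_e:
  assumes "h v = m *\<^sub>R v"
  shows "\<exists>k. (e ^^ k) v = 0"
proof (rule ccontr)
  assume "\<not> ?thesis"
  then have nz: "\<And>k. (e ^^ k) v \<noteq> 0" by auto
  define S where "S = (\<lambda>k. (e ^^ k) v) ` {..DIM('v)}"
  have inj: "inj_on (\<lambda>k. (e ^^ k) v) {..DIM('v)}"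
  proof (rule inj_onI)
    fix j k assume eq: "(e ^^ j) v = (e ^^ k) v"
    have "(m + 2 * real j) *\<^sub>R (e ^^ k) v = (m + 2 * real k) *\<^sub>R (e ^^ k) v"
      using h_epow[OF assms, of j] h_epow[OF assms, of k] eq by metis
    then have "m + 2 * real j = m + 2 * real k" using nz[of k] by simp
    then show "j = k" by simp
  qed
  have "independent S"
  proof (rule eig_indep[where T = "\<lambda>_::unit. h"])
    show "finite S" by (simp add: S_def)
    show "0 \<notin> S" using nz by (auto simp: S_def)
    show "\<forall>i. linear ((\<lambda>_::unit. h) i)" using lin_h by simp
    show "\<forall>v\<in>S. \<forall>i. \<exists>c. (\<lambda>_::unit. h) i v = c *\<^sub>R v"
      using h_epow[OF assms] by (auto simp: S_def)
    show "\<forall>va\<in>S. \<forall>w\<in>S. va \<noteq> w \<longrightarrow> (\<exists>i c d. (\<lambda>_::unit. h) i va = c *\<^sub>R va \<and> (\<lambda>_::unit. h) i w = d *\<^sub>R w \<and> c \<noteq> d)"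
    proof (intro ballI impI)
      fix va w assume "va \<in> S" "w \<in> S" "va \<noteq> w"
      then obtain j k where jk: "va = (e ^^ j) v" "w = (e ^^ k) v" by (auto simp: S_def)
      then have "j \<noteq> k" using \<open>va \<noteq> w\<close> by auto
      then have "m + 2 * real j \<noteq> m + 2 * real k" by simp
      then show "\<exists>i c d. (\<lambda>_::unit. h) i va = c *\<^sub>R va \<and> (\<lambda>_::unit. h) i w = d *\<^sub>R w \<and> c \<noteq> d"
        using h_epow[OF assms, of j] h_epow[OF assms, of k] jk by blast
    qed
  qed
  then have "card S \<le> DIM('v)" using independent_bound by blast
  moreover have "card S = Suc DIM('v)" using inj by (simp add: S_def card_image)
  ultimately show False by simp
qed

lemma comm_fpow:
  assumes "h v = m *\<^sub>R v"
  shows "e ((f ^^ Suc k) v) = (f ^^ Suc k) (e v) + (real (Suc k) * (m - real k)) *\<^sub>R (f ^^ k) v"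
proof (induction k)
  case 0
  then show ?case using ef[of v] assms by simp
next
  case (Suc k)
  have "e ((f ^^ Suc (Suc k)) v) = f (e ((f ^^ Suc k) v)) + h ((f ^^ Suc k) v)"
    using ef by simp
  also have "\<dots> = (f ^^ Suc (Suc k)) (e v) + (real (Suc k) * (m - real k)) *\<^sub>R (f ^^ Suc k) v
      + (m - 2 * real (Suc k)) *\<^sub>R (f ^^ Suc k) v"
    using Suc h_fpow[OF assms, of "Suc k"] lin_f by (simp add: linear_add linear_scale)
  also have "\<dots> = (f ^^ Suc (Suc k)) (e v) + (real (Suc (Suc k)) * (m - real (Suc k))) *\<^sub>R (f ^^ Suc k) v"
  proof -
    have "(real (Suc k) * (m - real k)) *\<^sub>R (f ^^ Suc k) v + (m - 2 * real (Suc k)) *\<^sub>R (f ^^ Suc k) v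
       = (real (Suc k) * (m - real k) + (m - 2 * real (Suc k))) *\<^sub>R (f ^^ Suc k) v"
      by (rule scaleR_add_left[symmetric])
    also have "real (Suc k) * (m - real k) + (m - 2 * real (Suc k)) = real (Suc (Suc k)) * (m - real (Suc k))"
      by (simp add: algebra_simps)
    finally show ?thesis by (simp add: add.assoc)
  qed
  finally show ?case .
qed

end




lemma top_exists:
  assumes "(g ^^ k) v = 0" "v \<noteq> (0::'a::zero)"
  shows "\<exists>p. (g ^^ p) v \<noteq> 0 \<and> g ((g ^^ p) v) = 0"
  using assms
proof (induction k)
  case 0 then show ?case by simp
next
  case (Suc k)
  show ?case
  proof (cases "(g ^^ k) v = 0")
    case True then show ?thesis using Suc by blast
  next
    case False then show ?thesis using Suc.prems(1) by auto
  qed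
qed

context sl2 begin

lemma sym: "sl2 f e (\<lambda>x. - h x)"
proof (rule sl2.intro)
  show "linear f" by (rule lin_f)
  show "linear e" by (rule lin_e)
  show "linear (\<lambda>x. - h x)"
    by (rule linearI) (simp_all add: linear_add[OF lin_h] linear_scale[OF lin_h])
  show "- h (f x) = f (- h x) + 2 *\<^sub>R f x" for x using hf[of x] linear_neg[OF lin_f, of "h x"] by simp
  show "- h (e x) = e (- h x) - 2 *\<^sub>R e x" for x using he[of x] linear_neg[OF lin_e, of "h x"] by simp
  show "f (e x) = e (f x) + - h x" for x using ef[of x] by simp
qed

lemma fin_f:
  assumes "h v = m *\<^sub>R v"
  shows "\<exists>k. (f ^^ k) v = 0"
  using sl2.fin_e[OF sym, of v "-m"] assms by simp

lemma integral:
  assumes v: "v \<noteq> 0" and hv: "h v = m *\<^sub>R v"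
  shows "m \<in> \<int>"
proof -
  obtain k where "(e ^^ k) v = 0" using fin_e[OF hv] by blast
  then obtain p where p: "(e ^^ p) v \<noteq> 0" "e ((e ^^ p) v) = 0" using top_exists v by metis
  define v0 where "v0 = (e ^^ p) v"
  have hv0: "h v0 = (m + 2 * real p) *\<^sub>R v0" unfolding v0_def by (rule h_epow[OF hv])
  obtain k' where "(f ^^ k') v0 = 0" using fin_f[OF hv0] by blast
  then obtain q where q: "(f ^^ q) v0 \<noteq> 0" "f ((f ^^ q) v0) = 0" using top_exists p(1) v0_def by metis
  have "e ((f ^^ Suc q) v0) = (f ^^ Suc q) (e v0) + (real (Suc q) * ((m + 2 * real p) - real q)) *\<^sub>R (f ^^ q) v0"
    by (rule comm_fpow[OF hv0])
  moreover have "(f ^^ Suc q) v0 = 0" using q(2) by simp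
  moreover have "e v0 = 0" using p(2) v0_def by simp
  ultimately have "(real (Suc q) * ((m + 2 * real p) - real q)) *\<^sub>R (f ^^ q) v0 = 0"
    using linear_0[OF lin_e] linear_0[OF lin_f] pow0[OF lin_f] by simp
  then have "real (Suc q) * ((m + 2 * real p) - real q) = 0" using q(1) by simp
  then have "m = real q - 2 * real p" by simp
  also have "\<dots> = of_int (int q - 2 * int p)" by simp
  finally show ?thesis by simp
qed

lemma f_inj:
  assumes v: "v \<noteq> 0" and hv: "h v = real n *\<^sub>R v"
  shows "(f ^^ n) v \<noteq> 0"
proof -
  have main: "\<forall>v n. v \<noteq> 0 \<longrightarrow> h v = real n *\<^sub>R v \<longrightarrow> (e ^^ p) v = 0 \<longrightarrow> (f ^^ n) v \<noteq> 0" for p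
  proof (induction p)
    case 0 then show ?case by simp
  next
    case (Suc p)
    show ?case
    proof (intro allI impI)
      fix v n assume v: "v \<noteq> 0" and hv: "h v = real n *\<^sub>R v" and ep: "(e ^^ Suc p) v = 0"
      show "(f ^^ n) v \<noteq> 0"
      proof (cases "e v = 0")
        case True
        show ?thesis
        proof
          assume fn: "(f ^^ n) v = 0"
          then obtain k where k: "(f ^^ k) v \<noteq> 0" "f ((f ^^ k) v) = 0" using top_exists v by metis
          have "k < n"
          proof (rule ccontr)
            assume "\<not> k < n"
            then have "k = (k - n) + n" by simp
            then have "(f ^^ k) v = (f ^^ (k - n)) ((f ^^ n) v)" by (metis funpow_add comp_apply)
            then show False using fn k(1) pow0[OF lin_f] by simp
          qed
          have "e ((f ^^ Suc k) v) = (f ^^ Suc k) (e v) + (real (Suc k) * (real n - real k)) *\<^sub>R (f ^^ k) v"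
            by (rule comm_fpow[OF hv])
          then have "(real (Suc k) * (real n - real k)) *\<^sub>R (f ^^ k) v = 0"
            using k(2) True linear_0[OF lin_e] linear_0[OF lin_f] pow0[OF lin_f] by simp
          then have "real (Suc k) * (real n - real k) = 0" using k(1) by simp
          then show False using \<open>k < n\<close> by simp
        qed
      next
        case False
        have hev: "h (e v) = real (Suc (Suc n)) *\<^sub>R e v"
          using he[of v] hv linear_scale[OF lin_e] by (simp add: scaleR_add_left[symmetric] add.commute)
        have "(e ^^ p) (e v) = 0" using ep by (simp add: funpow_Suc_right del: funpow.simps)
        then have IH: "(f ^^ Suc (Suc n)) (e v) \<noteq> 0" using Suc.IH False hev by blast
        show ?thesis
        proof
          assume fn: "(f ^^ n) v = 0"
          have "e ((f ^^ Suc n) v) = (f ^^ Suc n) (e v) + (real (Suc n) * (real n - real n)) *\<^sub>R (f ^^ n) v"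
            by (rule comm_fpow[OF hv])
          moreover have "(f ^^ Suc n) v = 0" using fn linear_0[OF lin_f] by simp
          ultimately have "(f ^^ Suc n) (e v) = 0" using linear_0[OF lin_e] by simp
          then have "(f ^^ Suc (Suc n)) (e v) = 0" using linear_0[OF lin_f] by simp
          then show False using IH by simp
        qed
      qed
    qed
  qed
  obtain p where "(e ^^ p) v = 0" using fin_e[OF hv] by blast
  then show ?thesis using main v hv by blast
qed

lemma e_inj:
  assumes v: "v \<noteq> 0" and hv: "h v = - (real n *\<^sub>R v)"
  shows "(e ^^ n) v \<noteq> 0"
  using sl2.f_inj[OF sym, of v n] assms by simp

end



definition Emap :: "('g::real_vector \<Rightarrow> 'g \<Rightarrow> 'g) \<Rightarrow> 'g \<Rightarrow> 'g \<Rightarrow> 'g \<times> 'g \<Rightarrow> 'g \<times> 'g" where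
  "Emap br X Y z = (br X (fst z) - br Y (snd z), br X (snd z) + br Y (fst z))"

definition Jc :: "'g::real_vector \<times> 'g \<Rightarrow> 'g \<times> 'g" where
  "Jc z = (- snd z, fst z)"

definition sigC :: "('g \<Rightarrow> 'g) \<Rightarrow> ('g \<Rightarrow> 'g) \<Rightarrow> 'g \<times> 'g \<Rightarrow> 'g \<times> 'g" where
  "sigC t1 t2 z = (t1 (t2 (fst z)), t1 (t2 (snd z)))"

lemma cscale_Jc: "cscale c z = Re c *\<^sub>R z + Im c *\<^sub>R Jc z"
  by (simp add: cscale_def Jc_def prod_eq_iff algebra_simps)

lemma cscale_mult: "cscale c (cscale d z) = cscale (c * d) z"
  by (simp add: cscale_def prod_eq_iff algebra_simps)

locale lie_setting =
  fixes br :: "'g::euclidean_space \<Rightarrow> 'g \<Rightarrow> 'g" and \<theta>1 \<theta>2 :: "'g \<Rightarrow> 'g" and a :: "'g set"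
  assumes lie: "lie_algebra br" and adinv: "ad_invariant_inner br"
    and t1: "involutive_automorphism br \<theta>1" and t2: "involutive_automorphism br \<theta>2"
    and mx: "maximal_abelian_subspace_in br (minus_space \<theta>1 \<inter> minus_space \<theta>2) a"
begin

lemma bil: "bilinear br" using lie by (simp add: lie_algebra_def)

lemma br_simps[simp]:
  "br (x + y) z = br x z + br y z" "br x (y + z) = br x y + br x z"
  "br (c *\<^sub>R x) z = c *\<^sub>R br x z" "br x (c *\<^sub>R z) = c *\<^sub>R br x z"
  "br (- x) z = - br x z" "br x (- z) = - br x z"
  "br (x - y) z = br x z - br y z" "br x (y - z) = br x y - br x z"
  "br 0 z = 0" "br x 0 = 0"
  using bil by (simp_all add: bilinear_ladd bilinear_radd bilinear_lmul bilinear_rmul bilinear_lneg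
      bilinear_rneg bilinear_lsub bilinear_rsub bilinear_lzero bilinear_rzero)

lemma br_self[simp]: "br x x = 0" using lie by (simp add: lie_algebra_def)

lemma br_anti: "br x y = - br y x"
proof -
  have "br (x + y) (x + y) = br x x + br x y + (br y x + br y y)" by (simp del: br_self)
  then have "br x y + br y x = 0" by simp
  then show ?thesis by (simp add: eq_neg_iff_add_eq_0)
qed

lemma jac: "br P (br Q u) = br Q (br P u) + br (br P Q) u"
proof -
  have "br P (br Q u) + br Q (br u P) + br u (br P Q) = 0" using lie by (simp add: lie_algebra_def)
  moreover have "br Q (br u P) = - br Q (br P u)" using br_anti[of u P] by simp
  moreover have "br u (br P Q) = - br (br P Q) u" by (rule br_anti)
  ultimately show ?thesis by (simp add: algebra_simps eq_neg_iff_add_eq_0)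
qed

lemma inner_br: "inner (br X Y) Z = - inner Y (br X Z)"
  using adinv by (simp add: ad_invariant_inner_def eq_neg_iff_add_eq_0)

lemma t1_lin: "linear \<theta>1" and t1_hom: "\<theta>1 (br x y) = br (\<theta>1 x) (\<theta>1 y)" and t1_inv[simp]: "\<theta>1 (\<theta>1 x) = x"
  using t1 by (auto simp: involutive_automorphism_def lie_automorphism_def)
lemma t2_lin: "linear \<theta>2" and t2_hom: "\<theta>2 (br x y) = br (\<theta>2 x) (\<theta>2 y)" and t2_inv[simp]: "\<theta>2 (\<theta>2 x) = x"
  using t2 by (auto simp: involutive_automorphism_def lie_automorphism_def)

lemma t1_simps[simp]: "\<theta>1 (x + y) = \<theta>1 x + \<theta>1 y" "\<theta>1 (c *\<^sub>R x) = c *\<^sub>R \<theta>1 x" "\<theta>1 (- x) = - \<theta>1 x"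
   "\<theta>1 (x - y) = \<theta>1 x - \<theta>1 y" "\<theta>1 0 = 0"
  using t1_lin by (simp_all add: linear_add linear_scale linear_neg linear_diff linear_0)
lemma t2_simps[simp]: "\<theta>2 (x + y) = \<theta>2 x + \<theta>2 y" "\<theta>2 (c *\<^sub>R x) = c *\<^sub>R \<theta>2 x" "\<theta>2 (- x) = - \<theta>2 x"
   "\<theta>2 (x - y) = \<theta>2 x - \<theta>2 y" "\<theta>2 0 = 0"
  using t2_lin by (simp_all add: linear_add linear_scale linear_neg linear_diff linear_0)

lemma a_sub: "subspace a" and a_ab: "\<And>x y. x \<in> a \<Longrightarrow> y \<in> a \<Longrightarrow> br x y = 0"
  and a_m: "a \<subseteq> minus_space \<theta>1 \<inter> minus_space \<theta>2"
  using mx by (auto simp: maximal_abelian_subspace_in_def abelian_subspace_def)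

lemma a_t1: "H \<in> a \<Longrightarrow> \<theta>1 H = - H" and a_t2: "H \<in> a \<Longrightarrow> \<theta>2 H = - H"
  using a_m by (auto simp: minus_space_def)

lemma rs_iff: "(X, Y) \<in> root_space br a \<gamma> \<longleftrightarrow> (\<forall>H\<in>a. br H X = - (inner \<gamma> H) *\<^sub>R Y \<and> br H Y = (inner \<gamma> H) *\<^sub>R X)"
  by (simp add: root_space_def)

lemma unit_re_im: "cmod \<epsilon> = 1 \<Longrightarrow> (Re \<epsilon>)^2 + (Im \<epsilon>)^2 = 1"
  by (simp add: cmod_def)

lemma sig_comp:
  assumes "sigC \<theta>1 \<theta>2 (X0, Y0) = cscale \<epsilon> (X0, Y0)"
  shows "\<theta>1 (\<theta>2 X0) = Re \<epsilon> *\<^sub>R X0 - Im \<epsilon> *\<^sub>R Y0" "\<theta>1 (\<theta>2 Y0) = Im \<epsilon> *\<^sub>R X0 + Re \<epsilon> *\<^sub>R Y0"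
  using assms by (simp_all add: sigC_def cscale_def)

lemma good_vector:
  assumes aa: "\<alpha> \<in> a" and rs: "(X0, Y0) \<in> root_space br a \<alpha>"
    and sg: "sigC \<theta>1 \<theta>2 (X0, Y0) = cscale \<epsilon> (X0, Y0)" and un: "cmod \<epsilon> = 1" and nz: "(X0, Y0) \<noteq> 0"
  shows "\<exists>X Y. (X, Y) \<in> root_space br a \<alpha> \<and> sigC \<theta>1 \<theta>2 (X, Y) = cscale \<epsilon> (X, Y) \<and> (X, Y) \<noteq> 0
     \<and> \<theta>1 X = X \<and> \<theta>1 Y = - Y"
proof -
  define r where "r = Re \<epsilon>"
  define t where "t = Im \<epsilon>"
  have rt: "r^2 + t^2 = 1" using unit_re_im[OF un] by (simp add: r_def t_def)
  have s1: "\<theta>1 (\<theta>2 X0) = r *\<^sub>R X0 - t *\<^sub>R Y0" "\<theta>1 (\<theta>2 Y0) = t *\<^sub>R X0 + r *\<^sub>R Y0"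
    using sig_comp[OF sg] by (simp_all add: r_def t_def)
  have "\<theta>1 (\<theta>2 (r *\<^sub>R X0 + t *\<^sub>R Y0)) = r *\<^sub>R \<theta>1 (\<theta>2 X0) + t *\<^sub>R \<theta>1 (\<theta>2 Y0)" by simp
  also have "\<dots> = r *\<^sub>R (r *\<^sub>R X0 - t *\<^sub>R Y0) + t *\<^sub>R (t *\<^sub>R X0 + r *\<^sub>R Y0)" by (simp only: s1)
  also have "\<dots> = (r^2 + t^2) *\<^sub>R X0" by (simp add: algebra_simps power2_eq_square)
  finally have "\<theta>1 (\<theta>2 (r *\<^sub>R X0 + t *\<^sub>R Y0)) = (r^2 + t^2) *\<^sub>R X0" .
  then have "\<theta>1 (\<theta>2 (r *\<^sub>R X0 + t *\<^sub>R Y0)) = X0" using rt by simp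
  then have s2x: "\<theta>2 (\<theta>1 X0) = r *\<^sub>R X0 + t *\<^sub>R Y0" by (metis t1_inv t2_inv)
  have "\<theta>1 (\<theta>2 (- t *\<^sub>R X0 + r *\<^sub>R Y0)) = - t *\<^sub>R \<theta>1 (\<theta>2 X0) + r *\<^sub>R \<theta>1 (\<theta>2 Y0)" by simp
  also have "\<dots> = - t *\<^sub>R (r *\<^sub>R X0 - t *\<^sub>R Y0) + r *\<^sub>R (t *\<^sub>R X0 + r *\<^sub>R Y0)" by (simp only: s1)
  also have "\<dots> = (r^2 + t^2) *\<^sub>R Y0" by (simp add: algebra_simps power2_eq_square)
  finally have "\<theta>1 (\<theta>2 (- t *\<^sub>R X0 + r *\<^sub>R Y0)) = (r^2 + t^2) *\<^sub>R Y0" .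
  then have "\<theta>1 (\<theta>2 (- t *\<^sub>R X0 + r *\<^sub>R Y0)) = Y0" using rt by simp
  then have s2y: "\<theta>2 (\<theta>1 Y0) = - t *\<^sub>R X0 + r *\<^sub>R Y0" by (metis t1_inv t2_inv)
  have brt: "br H (\<theta>1 Z) = - \<theta>1 (br H Z)" if "H \<in> a" for H Z
  proof -
    have "\<theta>1 (br (\<theta>1 H) Z) = br H (\<theta>1 Z)" using t1_hom[of "\<theta>1 H" Z] by simp
    then show ?thesis using a_t1[OF that] by simp
  qed
  have rsA: "(\<theta>1 X0, - \<theta>1 Y0) \<in> root_space br a \<alpha>"
    using rs by (simp add: rs_iff brt)
  have sgA: "sigC \<theta>1 \<theta>2 (\<theta>1 X0, - \<theta>1 Y0) = cscale \<epsilon> (\<theta>1 X0, - \<theta>1 Y0)"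
    by (simp add: sigC_def cscale_def s2x s2y r_def[symmetric] t_def[symmetric] algebra_simps)
  show ?thesis
  proof (cases "(X0 + \<theta>1 X0, Y0 - \<theta>1 Y0) = 0")
    case False
    show ?thesis
    proof (intro exI conjI)
      show "(X0 + \<theta>1 X0, Y0 - \<theta>1 Y0) \<in> root_space br a \<alpha>"
        unfolding rs_iff
      proof
        fix H assume H: "H \<in> a"
        have A1: "br H X0 = - (inner \<alpha> H) *\<^sub>R Y0" "br H Y0 = (inner \<alpha> H) *\<^sub>R X0"
          using rs H by (simp_all add: rs_iff)
        have A2: "br H (\<theta>1 X0) = (inner \<alpha> H) *\<^sub>R \<theta>1 Y0" "- br H (\<theta>1 Y0) = (inner \<alpha> H) *\<^sub>R \<theta>1 X0"
          using rsA H by (simp_all add: rs_iff)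
        then have A2': "br H (\<theta>1 Y0) = - (inner \<alpha> H) *\<^sub>R \<theta>1 X0" by (metis minus_minus scaleR_minus_left)
        show "br H (X0 + \<theta>1 X0) = - (inner \<alpha> H) *\<^sub>R (Y0 - \<theta>1 Y0) \<and>
              br H (Y0 - \<theta>1 Y0) = (inner \<alpha> H) *\<^sub>R (X0 + \<theta>1 X0)"
          by (simp only: br_simps A1 A2(1) A2') (simp add: algebra_simps)
      qed
      show "sigC \<theta>1 \<theta>2 (X0 + \<theta>1 X0, Y0 - \<theta>1 Y0) = cscale \<epsilon> (X0 + \<theta>1 X0, Y0 - \<theta>1 Y0)"
        using sg sgA by (simp add: sigC_def cscale_def algebra_simps)
      show "(X0 + \<theta>1 X0, Y0 - \<theta>1 Y0) \<noteq> 0" by (rule False)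
      show "\<theta>1 (X0 + \<theta>1 X0) = X0 + \<theta>1 X0" by (simp add: add.commute)
      show "\<theta>1 (Y0 - \<theta>1 Y0) = - (Y0 - \<theta>1 Y0)" by simp
    qed
  next
    case True
    then have tx: "\<theta>1 X0 = - X0" and ty: "\<theta>1 Y0 = Y0"
      by (simp_all add: zero_prod_def eq_neg_iff_add_eq_0 add.commute)
    show ?thesis
    proof (intro exI conjI)
      show "(- Y0, X0) \<in> root_space br a \<alpha>"
        using rs by (simp add: rs_iff)
      show "sigC \<theta>1 \<theta>2 (- Y0, X0) = cscale \<epsilon> (- Y0, X0)"
        using s1 by (simp add: sigC_def cscale_def r_def t_def algebra_simps)
      show "(- Y0, X0) \<noteq> 0" using nz by (auto simp: zero_prod_def)
      show "\<theta>1 (- Y0) = - Y0" using ty by simp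
      show "\<theta>1 X0 = - X0" by (rule tx)
    qed
  qed
qed

lemma bracket_in_a:
  assumes aa: "\<alpha> \<in> a" and an: "\<alpha> \<noteq> 0" and rs: "(X, Y) \<in> root_space br a \<alpha>"
    and sg: "sigC \<theta>1 \<theta>2 (X, Y) = cscale \<epsilon> (X, Y)" and un: "cmod \<epsilon> = 1" and nz: "(X, Y) \<noteq> 0"
    and tX: "\<theta>1 X = X" and tY: "\<theta>1 Y = - Y"
  shows "Y \<noteq> 0" "br X Y = - (inner Y Y) *\<^sub>R \<alpha>"
proof -
  have rsH: "br H X = - (inner \<alpha> H) *\<^sub>R Y" "br H Y = (inner \<alpha> H) *\<^sub>R X" if "H \<in> a" for H
    using rs that by (simp_all add: rs_iff)
  show Yn: "Y \<noteq> 0"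
  proof
    assume "Y = 0"
    then have "(inner \<alpha> \<alpha>) *\<^sub>R X = 0" using rsH(2)[OF aa] by simp
    then have "X = 0" using an by simp
    then show False using nz \<open>Y = 0\<close> by (simp add: zero_prod_def)
  qed
  define d where "d = br X Y"
  have comm: "br H d = 0" if "H \<in> a" for H
    unfolding d_def using jac[of H X Y] rsH[OF that] by simp
  have t1d: "\<theta>1 d = - d" unfolding d_def using t1_hom[of X Y] tX tY by simp
  define r where "r = Re \<epsilon>"
  define t where "t = Im \<epsilon>"
  have rt: "r^2 + t^2 = 1" using unit_re_im[OF un] by (simp add: r_def t_def)
  have s1: "\<theta>1 (\<theta>2 X) = r *\<^sub>R X - t *\<^sub>R Y" "\<theta>1 (\<theta>2 Y) = t *\<^sub>R X + r *\<^sub>R Y"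
    using sig_comp[OF sg] by (simp_all add: r_def t_def)
  have "\<theta>1 (\<theta>2 d) = br (\<theta>1 (\<theta>2 X)) (\<theta>1 (\<theta>2 Y))"
    unfolding d_def using t1_hom t2_hom by simp
  also have "\<dots> = (r^2 + t^2) *\<^sub>R d"
    unfolding s1 d_def using br_anti[of Y X] by (simp add: algebra_simps power2_eq_square)
  finally have "\<theta>1 (\<theta>2 d) = d" using rt by simp
  then have t2d: "\<theta>2 d = - d" using t1d by (metis t1_inv t1_simps(3))
  have dm: "d \<in> minus_space \<theta>1 \<inter> minus_space \<theta>2" using t1d t2d by (simp add: minus_space_def)
  have sub_m: "subspace (minus_space \<theta>1 \<inter> minus_space \<theta>2)"
    by (auto simp: subspace_def minus_space_def)
  define b where "b = span (insert d a)"
  have "abelian_subspace br b"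
    unfolding abelian_subspace_def
  proof (intro conjI ballI)
    show "subspace b" by (simp add: b_def)
    fix x y assume "x \<in> b" "y \<in> b"
    then obtain k1 k2 where k: "x - k1 *\<^sub>R d \<in> a" "y - k2 *\<^sub>R d \<in> a"
      using span_eq_iff[THEN iffD2, OF a_sub] by (auto simp: b_def span_insert)
    obtain h1 h2 where hh: "h1 \<in> a" "h2 \<in> a" "x = h1 + k1 *\<^sub>R d" "y = h2 + k2 *\<^sub>R d"
      using k by (metis diff_add_cancel)
    have "br h1 h2 = 0" using a_ab hh by simp
    moreover have "br h1 d = 0" using comm hh by simp
    moreover have "br d h2 = 0" using comm[of h2] hh br_anti[of d h2] by simp
    moreover have "br x y = br h1 h2 + k2 *\<^sub>R br h1 d + k1 *\<^sub>R br d h2 + (k1 * k2) *\<^sub>R br d d"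
      unfolding hh(3,4) by (simp add: algebra_simps)
    ultimately show "br x y = 0" by simp
  qed
  moreover have "a \<subseteq> b" unfolding b_def by (meson span_superset subset_insertI subset_trans)
  moreover have "b \<subseteq> minus_space \<theta>1 \<inter> minus_space \<theta>2"
    unfolding b_def using a_m dm sub_m by (intro span_minimal) auto
  ultimately have "b = a" using mx by (simp add: maximal_abelian_subspace_in_def)
  then have da: "d \<in> a" using span_superset[of "insert d a"] unfolding b_def by blast
  define D where "D = d + (inner Y Y) *\<^sub>R \<alpha>"
  have Da: "D \<in> a" unfolding D_def using da aa a_sub by (simp add: subspace_add subspace_scale)
  have "inner D H = 0" if "H \<in> a" for H
  proof -
    have "inner d H = - inner Y (br X H)" unfolding d_def by (rule inner_br)
    also have "br X H = - br H X" by (rule br_anti)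
    finally have "inner d H = - (inner \<alpha> H) * inner Y Y" using rsH(1)[OF that] by (simp add: inner_commute)
    then show ?thesis by (simp add: D_def inner_add_left)
  qed
  then have "inner D D = 0" using Da by blast
  then have "D = 0" by simp
  then show "br X Y = - (inner Y Y) *\<^sub>R \<alpha>" by (simp add: D_def d_def eq_neg_iff_add_eq_0)
qed

lemma sl2_rel_gen:
  assumes aX: "br A X = - a0 *\<^sub>R Y" and aY: "br A Y = a0 *\<^sub>R X" and xy: "br X Y = - s *\<^sub>R A"
    and hk: "k * a0 = -2" and hc: "2 * c * s = k"
  shows "sl2 (Emap br X Y) (\<lambda>z. c *\<^sub>R Emap br X (-Y) z) (\<lambda>z. k *\<^sub>R Jc (br A (fst z), br A (snd z)))"
proof (rule sl2.intro)
  show "linear (Emap br X Y)"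
    by (rule linearI) (simp_all add: Emap_def algebra_simps)
  show "linear (\<lambda>z. c *\<^sub>R Emap br X (-Y) z)"
    by (rule linearI) (simp_all add: Emap_def algebra_simps)
  show "linear (\<lambda>z. k *\<^sub>R Jc (br A (fst z), br A (snd z)))"
    by (rule linearI) (simp_all add: Jc_def algebra_simps)
next
  fix z :: "'g \<times> 'g"
  obtain u w where z: "z = (u, w)" by (cases z)
  have j1: "br A (br X u) = br X (br A u) - a0 *\<^sub>R br Y u" using jac[of A X u] aX by simp
  have j2: "br A (br X w) = br X (br A w) - a0 *\<^sub>R br Y w" using jac[of A X w] aX by simp
  have j3: "br A (br Y u) = br Y (br A u) + a0 *\<^sub>R br X u" using jac[of A Y u] aY by simp
  have j4: "br A (br Y w) = br Y (br A w) + a0 *\<^sub>R br X w" using jac[of A Y w] aY by simp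
  have j5: "br X (br Y u) = br Y (br X u) - s *\<^sub>R br A u" using jac[of X Y u] xy by simp
  have j6: "br X (br Y w) = br Y (br X w) - s *\<^sub>R br A w" using jac[of X Y w] xy by simp
  have ka: "k *\<^sub>R a0 *\<^sub>R v = (-2) *\<^sub>R v" for v :: 'g using hk by simp
  have hk': "a0 * k = -2" using hk by (simp add: mult.commute)
  have cs2: "(c * (s * 2)) *\<^sub>R v = (c * s) *\<^sub>R v + (c * s) *\<^sub>R v" for v :: 'g
    by (simp add: scaleR_add_left[symmetric])
  have hk'': "a0 * (c * k) = - (c * 2)" using hk by (metis mult.commute mult.left_commute mult_minus_right)
  show "k *\<^sub>R Jc (br A (fst (Emap br X Y z)), br A (snd (Emap br X Y z))) =
        Emap br X Y (k *\<^sub>R Jc (br A (fst z), br A (snd z))) + 2 *\<^sub>R Emap br X Y z"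
    unfolding z by (simp add: Emap_def Jc_def j1 j2 j3 j4 ka hk' hk'' algebra_simps)
  show "k *\<^sub>R Jc (br A (fst (c *\<^sub>R Emap br X (- Y) z)), br A (snd (c *\<^sub>R Emap br X (- Y) z))) =
        c *\<^sub>R Emap br X (- Y) (k *\<^sub>R Jc (br A (fst z), br A (snd z))) - 2 *\<^sub>R c *\<^sub>R Emap br X (- Y) z"
    unfolding z by (simp add: Emap_def Jc_def j1 j2 j3 j4 ka hk' hk'' algebra_simps)
  show "Emap br X Y (c *\<^sub>R Emap br X (- Y) z) =
        c *\<^sub>R Emap br X (- Y) (Emap br X Y z) + k *\<^sub>R Jc (br A (fst z), br A (snd z))"
    unfolding z by (simp add: Emap_def Jc_def j5 j6 hc[symmetric] algebra_simps cs2)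
qed

lemma weight:
  assumes "A \<in> a" "v \<in> root_space br a \<gamma>"
  shows "k *\<^sub>R Jc (br A (fst v), br A (snd v)) = (- k * inner \<gamma> A) *\<^sub>R v"
proof -
  obtain u w where v: "v = (u, w)" by (cases v)
  have "br A u = - (inner \<gamma> A) *\<^sub>R w" "br A w = (inner \<gamma> A) *\<^sub>R u"
    using assms by (simp_all add: v rs_iff)
  then show ?thesis by (simp add: v Jc_def)
qed

lemma E_root:
  assumes rs: "(X, Y) \<in> root_space br a \<alpha>" and v: "v \<in> root_space br a \<gamma>"
  shows "Emap br X Y v \<in> root_space br a (\<gamma> + \<alpha>)"
proof -
  obtain u w where vv: "v = (u, w)" by (cases v)
  show ?thesis unfolding vv rs_iff Emap_def fst_conv snd_conv
  proof
    fix H assume H: "H \<in> a"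
    have A: "br H X = - (inner \<alpha> H) *\<^sub>R Y" "br H Y = (inner \<alpha> H) *\<^sub>R X"
      using rs H by (simp_all add: rs_iff)
    have B: "br H u = - (inner \<gamma> H) *\<^sub>R w" "br H w = (inner \<gamma> H) *\<^sub>R u"
      using v H by (simp_all add: vv rs_iff)
    have j: "br H (br X u) = br X (br H u) + br (br H X) u" "br H (br X w) = br X (br H w) + br (br H X) w"
      "br H (br Y u) = br Y (br H u) + br (br H Y) u" "br H (br Y w) = br Y (br H w) + br (br H Y) w"
      by (rule jac)+
    show "br H (br X u - br Y w) = - inner (\<gamma> + \<alpha>) H *\<^sub>R (br X w + br Y u) \<and>
          br H (br X w + br Y u) = inner (\<gamma> + \<alpha>) H *\<^sub>R (br X u - br Y w)"
      by (simp only: br_simps j A B) (simp add: inner_add_left algebra_simps)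
  qed
qed

lemma E_sig:
  assumes sX: "sigC \<theta>1 \<theta>2 (X, Y) = cscale \<epsilon> (X, Y)" and sv: "sigC \<theta>1 \<theta>2 v = cscale \<delta> v"
  shows "sigC \<theta>1 \<theta>2 (Emap br X Y v) = cscale (\<epsilon> * \<delta>) (Emap br X Y v)"
proof -
  obtain u w where vv: "v = (u, w)" by (cases v)
  have s1: "\<theta>1 (\<theta>2 X) = Re \<epsilon> *\<^sub>R X - Im \<epsilon> *\<^sub>R Y" "\<theta>1 (\<theta>2 Y) = Im \<epsilon> *\<^sub>R X + Re \<epsilon> *\<^sub>R Y"
    using sig_comp[OF sX] by simp_all
  have s2: "\<theta>1 (\<theta>2 u) = Re \<delta> *\<^sub>R u - Im \<delta> *\<^sub>R w" "\<theta>1 (\<theta>2 w) = Im \<delta> *\<^sub>R u + Re \<delta> *\<^sub>R w"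
    using sig_comp[of u w \<delta>] sv by (simp_all add: vv)
  have hom: "\<theta>1 (\<theta>2 (br P Q)) = br (\<theta>1 (\<theta>2 P)) (\<theta>1 (\<theta>2 Q))" for P Q
    using t1_hom t2_hom by simp
  show ?thesis
    unfolding vv sigC_def Emap_def fst_conv snd_conv
    by (simp only: t1_simps t2_simps hom s1 s2) (simp add: cscale_def algebra_simps)
qed

lemma neg_root: "(X, Y) \<in> root_space br a \<alpha> \<Longrightarrow> (X, - Y) \<in> root_space br a (- \<alpha>)"
  by (simp add: rs_iff)

lemma neg_sig: "sigC \<theta>1 \<theta>2 (X, Y) = cscale \<epsilon> (X, Y) \<Longrightarrow> sigC \<theta>1 \<theta>2 (X, - Y) = cscale (cnj \<epsilon>) (X, - Y)"
  by (simp add: sigC_def cscale_def algebra_simps)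

lemma rs_scale: "v \<in> root_space br a \<gamma> \<Longrightarrow> c *\<^sub>R v \<in> root_space br a \<gamma>"
  by (cases v) (simp add: rs_iff)

lemma sig_scale:
  assumes "sigC \<theta>1 \<theta>2 v = cscale \<delta> v"
  shows "sigC \<theta>1 \<theta>2 (c *\<^sub>R v) = cscale \<delta> (c *\<^sub>R v)"
proof -
  have "sigC \<theta>1 \<theta>2 (c *\<^sub>R v) = c *\<^sub>R sigC \<theta>1 \<theta>2 v" by (simp add: sigC_def)
  also have "\<dots> = c *\<^sub>R cscale \<delta> v" using assms by simp
  also have "\<dots> = cscale \<delta> (c *\<^sub>R v)" by (simp add: cscale_def prod_eq_iff scaleR_diff_right scaleR_add_right mult.commute)
  finally show ?thesis .
qed

lemma rs_zero: "0 \<in> root_space br a \<gamma>"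
  by (simp add: root_space_def zero_prod_def)

end

lemma iter_gen:
  fixes g :: "'v \<Rightarrow> 'v" and \<beta> :: "'g::real_vector" and \<epsilon> \<delta> :: complex
  assumes step: "\<And>\<gamma> \<delta> v. Q \<gamma> \<delta> v \<Longrightarrow> Q (\<gamma> + \<beta>) (\<epsilon> * \<delta>) (g v)" and q: "Q \<gamma> \<delta> v"
  shows "Q (\<gamma> + real k *\<^sub>R \<beta>) (\<epsilon> ^ k * \<delta>) ((g ^^ k) v)"
proof (induction k)
  case 0 then show ?case using q by simp
next
  case (Suc k)
  have "Q ((\<gamma> + real k *\<^sub>R \<beta>) + \<beta>) (\<epsilon> * (\<epsilon> ^ k * \<delta>)) (g ((g ^^ k) v))" by (rule step[OF Suc])
  moreover have "(\<gamma> + real k *\<^sub>R \<beta>) + \<beta> = \<gamma> + real (Suc k) *\<^sub>R \<beta>" by (simp add: algebra_simps)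
  moreover have "\<epsilon> * (\<epsilon> ^ k * \<delta>) = \<epsilon> ^ Suc k * \<delta>" by simp
  ultimately show ?case by simp
qed




context lie_setting begin

lemma roots_finite: "finite {\<gamma> \<in> a. \<exists>v. v \<in> root_space br a \<gamma> \<and> v \<noteq> 0}"
proof (rule ccontr)
  define G where "G = {\<gamma> \<in> a. \<exists>v. v \<in> root_space br a \<gamma> \<and> v \<noteq> 0}"
  assume "\<not> finite {\<gamma> \<in> a. \<exists>v. v \<in> root_space br a \<gamma> \<and> v \<noteq> 0}"
  then have inf: "infinite G" by (simp add: G_def)
  obtain G' where G': "G' \<subseteq> G" "finite G'" "card G' = Suc DIM('g \<times> 'g)"
    using infinite_arbitrarily_large[OF inf] by blast
  have "\<forall>\<gamma>\<in>G. \<exists>v. v \<in> root_space br a \<gamma> \<and> v \<noteq> 0" by (simp add: G_def)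
  then obtain vec where vec: "\<And>\<gamma>. \<gamma> \<in> G \<Longrightarrow> vec \<gamma> \<in> root_space br a \<gamma> \<and> vec \<gamma> \<noteq> 0"
    by metis
  have Ga: "\<gamma> \<in> G \<Longrightarrow> \<gamma> \<in> a" for \<gamma> by (simp add: G_def)
  define T where "T H z = (if H \<in> a then - Jc (br H (fst z), br H (snd z)) else 0)" for H z
  have Tlin: "linear (T H)" for H
    by (rule linearI) (simp_all add: T_def Jc_def algebra_simps)
  have Teig: "T H (vec \<gamma>) = inner \<gamma> H *\<^sub>R vec \<gamma>" if "\<gamma> \<in> G" "H \<in> a" for \<gamma> H
  proof -
    obtain u w where uw: "vec \<gamma> = (u, w)" by (cases "vec \<gamma>")
    have "br H u = - (inner \<gamma> H) *\<^sub>R w" "br H w = (inner \<gamma> H) *\<^sub>R u"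
      using vec[OF that(1)] that(2) by (simp_all add: uw rs_iff)
    then show ?thesis using that(2) by (simp add: uw T_def Jc_def)
  qed
  have sep: "inner \<gamma> (\<gamma> - \<gamma>') \<noteq> inner \<gamma>' (\<gamma> - \<gamma>')" if "\<gamma> \<noteq> \<gamma>'" for \<gamma> \<gamma>' :: 'g
  proof
    assume "inner \<gamma> (\<gamma> - \<gamma>') = inner \<gamma>' (\<gamma> - \<gamma>')"
    then have "inner (\<gamma> - \<gamma>') (\<gamma> - \<gamma>') = 0" by (simp add: inner_diff_left)
    then show False using that by simp
  qed
  have diffa: "\<gamma> \<in> G \<Longrightarrow> \<gamma>' \<in> G \<Longrightarrow> \<gamma> - \<gamma>' \<in> a" for \<gamma> \<gamma>'
    using Ga a_sub by (simp add: subspace_diff)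
  have inj: "inj_on vec G'"
  proof (rule inj_onI)
    fix \<gamma> \<gamma>' assume g: "\<gamma> \<in> G'" "\<gamma>' \<in> G'" "vec \<gamma> = vec \<gamma>'"
    show "\<gamma> = \<gamma>'"
    proof (rule ccontr)
      assume ne: "\<gamma> \<noteq> \<gamma>'"
      have gg: "\<gamma> \<in> G" "\<gamma>' \<in> G" using g G' by auto
      have e1: "T (\<gamma> - \<gamma>') (vec \<gamma>) = inner \<gamma> (\<gamma> - \<gamma>') *\<^sub>R vec \<gamma>"
        by (rule Teig[OF gg(1) diffa[OF gg]])
      have e2: "T (\<gamma> - \<gamma>') (vec \<gamma>') = inner \<gamma>' (\<gamma> - \<gamma>') *\<^sub>R vec \<gamma>'"
        by (rule Teig[OF gg(2) diffa[OF gg]])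
      have "inner \<gamma> (\<gamma> - \<gamma>') *\<^sub>R vec \<gamma> = inner \<gamma>' (\<gamma> - \<gamma>') *\<^sub>R vec \<gamma>"
        using e1 e2 g(3) by metis
      then show False using sep[OF ne] vec[OF gg(1)] by simp
    qed
  qed
  have "independent (vec ` G')"
  proof (rule eig_indep[where T = T])
    show "finite (vec ` G')" using G' by simp
    show "0 \<notin> vec ` G'" using vec G' by auto
    show "\<forall>i. linear (T i)" using Tlin by simp
    show "\<forall>v\<in>vec ` G'. \<forall>i. \<exists>c. T i v = c *\<^sub>R v"
    proof (intro ballI allI)
      fix v i assume "v \<in> vec ` G'"
      then obtain \<gamma> where g: "\<gamma> \<in> G" "v = vec \<gamma>" using G' by auto
      obtain u w where uw: "vec \<gamma> = (u, w)" by (cases "vec \<gamma>")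
      show "\<exists>c. T i v = c *\<^sub>R v"
      proof (cases "i \<in> a")
        case True then show ?thesis using Teig g by blast
      next
        case False
        then have "T i v = 0 *\<^sub>R v" by (simp add: T_def)
        then show ?thesis by blast
      qed
    qed
    show "\<forall>v\<in>vec ` G'. \<forall>w\<in>vec ` G'. v \<noteq> w \<longrightarrow> (\<exists>i c d. T i v = c *\<^sub>R v \<and> T i w = d *\<^sub>R w \<and> c \<noteq> d)"
    proof (intro ballI impI)
      fix v w assume "v \<in> vec ` G'" "w \<in> vec ` G'" "v \<noteq> w"
      then obtain \<gamma> \<gamma>' where g: "\<gamma> \<in> G" "\<gamma>' \<in> G" "v = vec \<gamma>" "w = vec \<gamma>'" using G' by auto
      then have "\<gamma> \<noteq> \<gamma>'" using \<open>v \<noteq> w\<close> by auto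
      then show "\<exists>i c d. T i v = c *\<^sub>R v \<and> T i w = d *\<^sub>R w \<and> c \<noteq> d"
        using Teig[OF g(1) diffa[OF g(1,2)]] Teig[OF g(2) diffa[OF g(1,2)]] sep g by blast
    qed
  qed
  then have "card (vec ` G') \<le> DIM('g \<times> 'g)" using independent_bound by blast
  moreover have "card (vec ` G') = card G'" using inj by (simp add: card_image)
  ultimately show False using G' by simp
qed

lemma rse_iff:
  "root_space_eps br \<theta>1 \<theta>2 a \<beta> \<delta> \<noteq> {(0, 0)} \<longleftrightarrow>
     (\<exists>v. v \<in> root_space br a \<beta> \<and> sigC \<theta>1 \<theta>2 v = cscale \<delta> v \<and> v \<noteq> 0)"
proof -
  have S: "root_space_eps br \<theta>1 \<theta>2 a \<beta> \<delta> = {v. v \<in> root_space br a \<beta> \<and> sigC \<theta>1 \<theta>2 v = cscale \<delta> v}"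
    by (auto simp: root_space_eps_def sigC_def)
  have z: "(0, 0) \<in> root_space_eps br \<theta>1 \<theta>2 a \<beta> \<delta>"
    unfolding S using rs_zero by (simp add: sigC_def cscale_def zero_prod_def)
  show ?thesis
  proof
    assume "root_space_eps br \<theta>1 \<theta>2 a \<beta> \<delta> \<noteq> {(0, 0)}"
    then obtain v where "v \<in> root_space_eps br \<theta>1 \<theta>2 a \<beta> \<delta>" "v \<noteq> (0, 0)" using z by blast
    then show "\<exists>v. v \<in> root_space br a \<beta> \<and> sigC \<theta>1 \<theta>2 v = cscale \<delta> v \<and> v \<noteq> 0"
      unfolding S zero_prod_def by blast
  next
    assume "\<exists>v. v \<in> root_space br a \<beta> \<and> sigC \<theta>1 \<theta>2 v = cscale \<delta> v \<and> v \<noteq> 0"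
    then obtain v where "v \<in> root_space_eps br \<theta>1 \<theta>2 a \<beta> \<delta>" "v \<noteq> (0, 0)"
      unfolding S by (auto simp: zero_prod_def)
    then show "root_space_eps br \<theta>1 \<theta>2 a \<beta> \<delta> \<noteq> {(0, 0)}" by blast
  qed
qed

lemma memR:
  "\<beta> \<in> Sigma_tilde_H br \<theta>1 \<theta>2 a H \<longleftrightarrow> \<beta> \<in> a \<and> \<beta> \<noteq> 0 \<and>
    (\<exists>\<delta> v. cmod \<delta> = 1 \<and> v \<in> root_space br a \<beta> \<and> sigC \<theta>1 \<theta>2 v = cscale \<delta> v \<and> v \<noteq> 0 \<and>
        exp (2 * \<i> * complex_of_real (inner \<beta> H)) * \<delta> = 1)"
  unfolding Sigma_tilde_H_def Sigma_eps_H_def Sigma_eps_def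
  using rse_iff phi_cond_iff by auto

lemma refl_nz:
  assumes "\<beta> \<noteq> 0" "\<alpha> \<noteq> 0"
  shows "\<beta> - (2 * inner \<beta> \<alpha> / inner \<alpha> \<alpha>) *\<^sub>R \<alpha> \<noteq> 0"
proof
  define n where "n = 2 * inner \<beta> \<alpha> / inner \<alpha> \<alpha>"
  assume "\<beta> - (2 * inner \<beta> \<alpha> / inner \<alpha> \<alpha>) *\<^sub>R \<alpha> = 0"
  then have b: "\<beta> = n *\<^sub>R \<alpha>" by (simp add: n_def)
  have a0: "inner \<alpha> \<alpha> \<noteq> 0" using assms by simp
  have "n = 2 * (n * inner \<alpha> \<alpha>) / inner \<alpha> \<alpha>" using n_def b by simp
  also have "\<dots> = 2 * n" using a0 by simp
  finally have "n = 0" by simp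
  then show False using b assms by simp
qed

lemma unit_cnj: "cmod \<epsilon> = 1 \<Longrightarrow> \<epsilon> * cnj \<epsilon> = 1"
  using complex_norm_square[of \<epsilon>] by simp

lemma P_add: "exp (2 * \<i> * complex_of_real (x + y)) = exp (2 * \<i> * complex_of_real x) * exp (2 * \<i> * complex_of_real y)"
  by (simp add: distrib_left exp_add)

lemma P_nat: "exp (2 * \<i> * complex_of_real (real N * x)) = exp (2 * \<i> * complex_of_real x) ^ N"
proof -
  have "2 * \<i> * complex_of_real (real N * x) = of_nat N * (2 * \<i> * complex_of_real x)" by simp
  then show ?thesis by (simp only: exp_of_nat_mult)
qed

lemma root_pair:
  assumes \<alpha>R: "\<alpha> \<in> Sigma_tilde_H br \<theta>1 \<theta>2 a H" and \<beta>R: "\<beta> \<in> Sigma_tilde_H br \<theta>1 \<theta>2 a H"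
  shows "2 * inner \<beta> \<alpha> / inner \<alpha> \<alpha> \<in> \<int> \<and>
         \<beta> - (2 * inner \<beta> \<alpha> / inner \<alpha> \<alpha>) *\<^sub>R \<alpha> \<in> Sigma_tilde_H br \<theta>1 \<theta>2 a H"
proof -
  obtain \<epsilon> Z where aa: "\<alpha> \<in> a" and an: "\<alpha> \<noteq> 0" and un: "cmod \<epsilon> = 1"
    and rsZ: "Z \<in> root_space br a \<alpha>" and sgZ: "sigC \<theta>1 \<theta>2 Z = cscale \<epsilon> Z" and nzZ: "Z \<noteq> 0"
    and exA: "exp (2 * \<i> * complex_of_real (inner \<alpha> H)) * \<epsilon> = 1"
    using \<alpha>R memR by blast
  obtain X0 Y0 where Z: "Z = (X0, Y0)" by (cases Z)
  obtain X Y where rs: "(X, Y) \<in> root_space br a \<alpha>" and sg: "sigC \<theta>1 \<theta>2 (X, Y) = cscale \<epsilon> (X, Y)"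
    and nz: "(X, Y) \<noteq> 0" and tX: "\<theta>1 X = X" and tY: "\<theta>1 Y = - Y"
    using good_vector[OF aa rsZ[unfolded Z] sgZ[unfolded Z] un nzZ[unfolded Z]] by blast
  have Yn: "Y \<noteq> 0" and xy: "br X Y = - (inner Y Y) *\<^sub>R \<alpha>"
    using bracket_in_a[OF aa an rs sg un nz tX tY] by auto
  define a0 where "a0 = inner \<alpha> \<alpha>"
  define s where "s = inner Y Y"
  have a0p: "a0 > 0" using an by (simp add: a0_def)
  have sp: "s > 0" using Yn by (simp add: s_def)
  define k where "k = - 2 / a0"
  define c where "c = - 1 / (s * a0)"
  have aX: "br \<alpha> X = - a0 *\<^sub>R Y" and aY: "br \<alpha> Y = a0 *\<^sub>R X"
    using rs aa by (simp_all add: rs_iff a0_def)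
  have hk: "k * a0 = -2" using a0p by (simp add: k_def)
  have hc: "2 * c * s = k" using a0p sp by (simp add: k_def c_def field_simps)
  define e where "e = Emap br X Y"
  define f where "f = (\<lambda>z. c *\<^sub>R Emap br X (-Y) z)"
  define h where "h = (\<lambda>z. k *\<^sub>R Jc (br \<alpha> (fst z), br \<alpha> (snd z)))"
  interpret S: sl2 e f h
    unfolding e_def f_def h_def
    by (rule sl2_rel_gen[OF aX aY _ hk hc]) (simp add: xy s_def)
  obtain \<delta> v where ba: "\<beta> \<in> a" and bn: "\<beta> \<noteq> 0" and und: "cmod \<delta> = 1"
    and rsv: "v \<in> root_space br a \<beta>" and sgv: "sigC \<theta>1 \<theta>2 v = cscale \<delta> v" and nzv: "v \<noteq> 0"
    and exB: "exp (2 * \<i> * complex_of_real (inner \<beta> H)) * \<delta> = 1"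
    using \<beta>R memR by blast
  define n where "n = 2 * inner \<beta> \<alpha> / inner \<alpha> \<alpha>"
  have hv: "h v = n *\<^sub>R v"
    unfolding h_def using weight[OF aa rsv, of k] by (simp add: k_def n_def a0_def)
  have nint: "n \<in> \<int>" by (rule S.integral[OF nzv hv])
  then obtain z :: int where nz_def: "n = of_int z" by (auto elim: Ints_cases)
  define Q where "Q \<gamma> \<delta>' w \<longleftrightarrow> w \<in> root_space br a \<gamma> \<and> sigC \<theta>1 \<theta>2 w = cscale \<delta>' w" for \<gamma> \<delta>' w
  have Qv: "Q \<beta> \<delta> v" using rsv sgv by (simp add: Q_def)
  have unA: "\<epsilon> * cnj \<epsilon> = 1" by (rule unit_cnj[OF un])
  define A where "A = exp (2 * \<i> * complex_of_real (inner \<alpha> H))"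
  define B where "B = exp (2 * \<i> * complex_of_real (inner \<beta> H))"
  have AB: "A * \<epsilon> = 1" "B * \<delta> = 1" using exA exB by (simp_all add: A_def B_def)
  have target_in: "\<beta> - n *\<^sub>R \<alpha> \<in> a" using ba aa a_sub by (simp add: subspace_diff subspace_scale)
  have target_nz: "\<beta> - n *\<^sub>R \<alpha> \<noteq> 0" using refl_nz[OF bn an] by (simp add: n_def)
  have refl: "\<beta> - n *\<^sub>R \<alpha> \<in> Sigma_tilde_H br \<theta>1 \<theta>2 a H"
  proof (cases "z \<ge> 0")
    case True
    define N where "N = nat z"
    have nN: "n = real N" using True by (simp add: N_def nz_def)
    have step: "Q (\<gamma> + - \<alpha>) (cnj \<epsilon> * \<delta>') (f w)" if "Q \<gamma> \<delta>' w" for \<gamma> \<delta>' w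
    proof -
      have "Emap br X (- Y) w \<in> root_space br a (\<gamma> + - \<alpha>)"
        using E_root[OF neg_root[OF rs]] that by (simp add: Q_def)
      moreover have "sigC \<theta>1 \<theta>2 (Emap br X (- Y) w) = cscale (cnj \<epsilon> * \<delta>') (Emap br X (- Y) w)"
        using E_sig[OF neg_sig[OF sg]] that by (simp add: Q_def)
      ultimately show ?thesis unfolding Q_def f_def using rs_scale sig_scale by blast
    qed
    have QN: "Q (\<beta> + real N *\<^sub>R (- \<alpha>)) (cnj \<epsilon> ^ N * \<delta>) ((f ^^ N) v)"
      by (rule iter_gen[where Q = Q, OF step Qv])
    have fnz: "(f ^^ N) v \<noteq> 0" using S.f_inj[OF nzv] hv nN by simp
    have eqt: "\<beta> + real N *\<^sub>R (- \<alpha>) = \<beta> - n *\<^sub>R \<alpha>" using nN by simp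
    have ex: "exp (2 * \<i> * complex_of_real (inner (\<beta> - n *\<^sub>R \<alpha>) H)) * (cnj \<epsilon> ^ N * \<delta>) = 1"
    proof -
      define P where "P = exp (2 * \<i> * complex_of_real (inner (\<beta> - n *\<^sub>R \<alpha>) H))"
      have "inner \<beta> H = inner (\<beta> - n *\<^sub>R \<alpha>) H + real N * inner \<alpha> H"
        using nN by (simp add: inner_diff_left)
      then have "B = P * A ^ N" unfolding B_def P_def A_def using P_add P_nat by metis
      then have "P * (cnj \<epsilon> ^ N * \<delta>) = P * (A * \<epsilon>) ^ N * (cnj \<epsilon> ^ N * \<delta>)" using AB by simp
      also have "\<dots> = (P * A ^ N) * \<delta> * (\<epsilon> * cnj \<epsilon>) ^ N" by (simp add: power_mult_distrib algebra_simps)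
      also have "\<dots> = 1" using \<open>B = P * A ^ N\<close> AB unA by simp
      finally show ?thesis by (simp add: P_def)
    qed
    have "cmod (cnj \<epsilon> ^ N * \<delta>) = 1" using un und by (simp add: norm_mult norm_power)
    then show ?thesis
      using memR target_in target_nz QN fnz ex eqt unfolding Q_def by metis
  next
    case False
    define N where "N = nat (- z)"
    have nN: "n = - real N" using False by (simp add: N_def nz_def)
    have step: "Q (\<gamma> + \<alpha>) (\<epsilon> * \<delta>') (e w)" if "Q \<gamma> \<delta>' w" for \<gamma> \<delta>' w
      using E_root[OF rs] E_sig[OF sg] that by (simp add: Q_def e_def)
    have QN: "Q (\<beta> + real N *\<^sub>R \<alpha>) (\<epsilon> ^ N * \<delta>) ((e ^^ N) v)"
      by (rule iter_gen[where Q = Q, OF step Qv])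
    have enz: "(e ^^ N) v \<noteq> 0" using S.e_inj[OF nzv] hv nN by simp
    have eqt: "\<beta> + real N *\<^sub>R \<alpha> = \<beta> - n *\<^sub>R \<alpha>" using nN by simp
    have ex: "exp (2 * \<i> * complex_of_real (inner (\<beta> - n *\<^sub>R \<alpha>) H)) * (\<epsilon> ^ N * \<delta>) = 1"
    proof -
      have "inner (\<beta> - n *\<^sub>R \<alpha>) H = inner \<beta> H + real N * inner \<alpha> H"
        using nN by (simp add: inner_diff_left inner_add_left)
      then have "exp (2 * \<i> * complex_of_real (inner (\<beta> - n *\<^sub>R \<alpha>) H)) = B * A ^ N"
        unfolding B_def A_def using P_add P_nat by metis
      then have "exp (2 * \<i> * complex_of_real (inner (\<beta> - n *\<^sub>R \<alpha>) H)) * (\<epsilon> ^ N * \<delta>) = (B * \<delta>) * (A * \<epsilon>) ^ N"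
        by (simp add: power_mult_distrib algebra_simps)
      then show ?thesis using AB by simp
    qed
    have "cmod (\<epsilon> ^ N * \<delta>) = 1" using un und by (simp add: norm_mult norm_power)
    then show ?thesis
      using memR target_in target_nz QN enz ex eqt unfolding Q_def by metis
  qed
  show ?thesis using nint refl by (simp add: n_def)
qed

end

theorem proposition4p13:
  fixes br :: "'g::euclidean_space \<Rightarrow> 'g \<Rightarrow> 'g"
    and \<theta>1 \<theta>2 :: "'g \<Rightarrow> 'g" and a :: "'g set" and H :: 'g and l :: nat
  assumes "semisimple_lie_algebra br"
    and "ad_invariant_inner br"
    and "involutive_automorphism br \<theta>1"
    and "involutive_automorphism br \<theta>2"
    and "l > 0"
    and "((\<theta>1 \<circ> \<theta>2) ^^ l) = id"
    and "maximal_abelian_subspace_in br (minus_space \<theta>1 \<inter> minus_space \<theta>2) a"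
    and "H \<in> a"
    and "Sigma_tilde_H br \<theta>1 \<theta>2 a H \<noteq> {}"
  shows "root_system_of (span (Sigma_tilde_H br \<theta>1 \<theta>2 a H)) (Sigma_tilde_H br \<theta>1 \<theta>2 a H)"
proof -
  interpret L: lie_setting br \<theta>1 \<theta>2 a
    using assms by (unfold_locales) (simp_all add: semisimple_lie_algebra_def)
  let ?R = "Sigma_tilde_H br \<theta>1 \<theta>2 a H"
  have "?R \<subseteq> {\<gamma> \<in> a. \<exists>v. v \<in> root_space br a \<gamma> \<and> v \<noteq> 0}"
    using L.memR by blast
  then have fin: "finite ?R" using L.roots_finite finite_subset by blast
  have z: "0 \<notin> ?R" using L.memR by blast
  show ?thesis
    unfolding root_system_of_def
    using fin z L.root_pair span_superset by blast
qed


end
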